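(* Let $b \le 0$, let $\tau \ge 0$ be finite, and let $x_0 \ge 0$. Let $x(t)$ be the solution of the delay differential equation $$\frac{dx(t)}{dt} = x(t) - x^2(t)\exp\{-b\,x(t-\tau)\} \qquad (t>0)$$ with constant history $x(t) = x_0$ for $t \le 0$. Then $x(t)$ is bounded for all $t \ge 0$. Moreover, if $b < 0$, there exists a time $t_0 = t_0(x_0,\tau)$ such that $$0 \le x(t) \le 1 \qquad \text{for all } t \ge t_0.$$
   Context: This is the evolution equation $\frac{dx}{dt} = \sigma_1 x - \sigma_2 x^2 \exp\{-b x(t-\tau)\}$ for a dimensionless population $x(t)$ with nonlinear delayed carrying capacity $y = \exp\{b x(t-\tau)\}$, specialized to the case $\sigma_1 = \sigma_2 = 1$ ("gain and competition"); $b$ is the production parameter and $\tau$ the time delay. *)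

theory Defs
  imports "HOL-Analysis.Analysis"
begin

end

theory Submission
  imports Defs
begin

lemma mvt_real:
  fixes f :: "real \<Rightarrow> real"
  assumes "a < b" "continuous_on {a..b} f"
    "\<And>t. a < t \<Longrightarrow> t < b \<Longrightarrow> (f has_real_derivative D t) (at t)"
  obtains \<xi> where "a < \<xi>" "\<xi> < b" "f b - f a = D \<xi> * (b - a)"
proof -
  have "\<And>t. a < t \<Longrightarrow> t < b \<Longrightarrow> (f has_derivative (\<lambda>h. D t * h)) (at t)"
    using assms(3) by (simp add: has_field_derivative_def)
  then obtain \<xi> where "a < \<xi>" "\<xi> < b" "f b - f a = (\<lambda>h. D \<xi> * h) (b - a)"
    using mvt[OF assms(1,2), of "\<lambda>t h. D t * h"] by blast
  then show ?thesis using that by simp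
qed

lemma zero_stays:
  fixes u :: "real \<Rightarrow> real"
  assumes "a \<le> c" "continuous_on {a..c} u"
    "\<And>t. a < t \<Longrightarrow> t < c \<Longrightarrow> (u has_real_derivative D t) (at t)"
    "\<And>t. a < t \<Longrightarrow> t < c \<Longrightarrow> \<bar>D t\<bar> \<le> M * \<bar>u t\<bar>" "u a = 0"
  shows "u c = 0"
proof -
  define v where "v t = (u t)^2 * exp (-2*M*t)" for t
  have "v c \<le> v a"
  proof (cases "a = c")
    case False
    hence ac: "a < c" using assms(1) by simp
    have cv: "continuous_on {a..c} v" unfolding v_def
      by (intro continuous_intros assms(2))
    have dv: "(v has_real_derivative (2 * u t * D t * exp(-2*M*t) + (u t)^2 * (exp(-2*M*t) * (-2*M)))) (at t)"
      if "a < t" "t < c" for t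
      unfolding v_def using assms(3)[OF that]
      by (auto intro!: derivative_eq_intros)
    obtain \<xi> where xi: "a < \<xi>" "\<xi> < c"
      "v c - v a = (2 * u \<xi> * D \<xi> * exp(-2*M*\<xi>) + (u \<xi>)^2 * (exp(-2*M*\<xi>) * (-2*M))) * (c - a)"
      using mvt_real[OF ac cv dv] by blast
    have "u \<xi> * D \<xi> \<le> \<bar>u \<xi>\<bar> * \<bar>D \<xi>\<bar>" by (simp add: abs_mult[symmetric])
    also have "\<dots> \<le> \<bar>u \<xi>\<bar> * (M * \<bar>u \<xi>\<bar>)"
      using assms(4)[OF xi(1,2)] by (simp add: mult_left_mono)
    also have "\<dots> = M * (u \<xi>)^2" by (simp add: power2_eq_square)
    finally have "u \<xi> * D \<xi> \<le> M * (u \<xi>)^2" .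
    hence "2 * u \<xi> * D \<xi> * exp(-2*M*\<xi>) + (u \<xi>)^2 * (exp(-2*M*\<xi>) * (-2*M)) \<le> 0"
    proof -
      assume h: "u \<xi> * D \<xi> \<le> M * (u \<xi>)^2"
      have "2 * u \<xi> * D \<xi> * exp(-2*M*\<xi>) + (u \<xi>)^2 * (exp(-2*M*\<xi>) * (-2*M))
           = 2 * exp(-2*M*\<xi>) * (u \<xi> * D \<xi> - M * (u \<xi>)^2)" by (simp add: algebra_simps)
      also have "\<dots> \<le> 0" using h by (intro mult_nonneg_nonpos) auto
      finally show ?thesis .
    qed
    hence "v c - v a \<le> 0" using xi(3) ac by (simp add: mult_nonpos_nonneg)
    thus ?thesis by simp
  qed simp
  moreover have "v a = 0" using assms(5) by (simp add: v_def)
  ultimately have "(u c)^2 * exp (-2*M*c) \<le> 0" by (simp add: v_def)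
  hence "(u c)^2 \<le> 0" by (simp add: mult_le_0_iff)
  thus ?thesis by simp
qed

lemma stay_below:
  fixes f :: "real \<Rightarrow> real"
  assumes "a \<le> c" "continuous_on {a..c} f"
    "\<And>t. a < t \<Longrightarrow> t < c \<Longrightarrow> (f has_real_derivative D t) (at t)"
    "\<And>t. a < t \<Longrightarrow> t < c \<Longrightarrow> f t > K \<Longrightarrow> D t \<le> 0" "f a \<le> K"
  shows "f c \<le> K"
proof (rule ccontr)
  assume fc: "\<not> f c \<le> K"
  define S where "S = {a..c} \<inter> f -` {..K}"
  have cS: "closed S" unfolding S_def
    by (rule continuous_closed_preimage[OF assms(2)]) auto
  have nS: "S \<noteq> {}" using assms(1,5) by (auto simp: S_def)
  have bS: "bdd_above S" unfolding S_def by (auto intro: bdd_aboveI[where M=c])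
  define t1 where "t1 = Sup S"
  have t1S: "t1 \<in> S" unfolding t1_def by (rule closed_contains_Sup[OF nS bS cS])
  hence t1: "a \<le> t1" "t1 \<le> c" "f t1 \<le> K" by (auto simp: S_def)
  have t1c: "t1 < c" using t1 fc by (cases "t1 = c") auto
  have above: "f t > K" if "t1 < t" "t \<le> c" for t
  proof (rule ccontr)
    assume "\<not> K < f t"
    hence "t \<in> S" using that t1 by (auto simp: S_def)
    hence "t \<le> t1" unfolding t1_def by (rule cSup_upper[OF _ bS])
    with that show False by simp
  qed
  have "continuous_on {t1..c} f" by (rule continuous_on_subset[OF assms(2)]) (use t1 in auto)
  then obtain \<xi> where xi: "t1 < \<xi>" "\<xi> < c" "f c - f t1 = D \<xi> * (c - t1)"
    using mvt_real[OF t1c, of f D] assms(3) t1 by auto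
  have "D \<xi> \<le> 0" using assms(4)[of \<xi>] above[of \<xi>] xi t1 by auto
  hence "f c - f t1 \<le> 0" using xi t1c by (simp add: mult_nonpos_nonneg)
  hence "f c \<le> f t1" by simp
  with t1 fc show False by simp
qed

theorem proposition1:
  fixes x :: "real \<Rightarrow> real" and b \<tau> x0 :: real
  assumes hb: "b \<le> 0" and htau: "\<tau> \<ge> 0" and hx0: "x0 \<ge> 0"
    and hist: "\<And>t. t \<le> 0 \<Longrightarrow> x t = x0"
    and cont: "continuous_on {0..} x"
    and ode: "\<And>t. t > 0 \<Longrightarrow>
       (x has_real_derivative (x t - (x t)^2 * exp (- b * x (t - \<tau>)))) (at t)"
  shows "bounded (x ` {0..}) \<and>
         (b < 0 \<longrightarrow> (\<exists>t0. \<forall>t\<ge>t0. 0 \<le> x t \<and> x t \<le> 1))"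
proof -
  define D where "D t = x t - (x t)^2 * exp (- b * x (t - \<tau>))" for t
  have der: "\<And>t. t > 0 \<Longrightarrow> (x has_real_derivative D t) (at t)" using ode by (simp add: D_def)
  have "continuous_on {..0} x"
    by (rule continuous_on_cong[THEN iffD2, OF refl _ continuous_on_const[of _ x0]]) (simp add: hist)
  hence cU: "continuous_on UNIV x"
  proof -
    have "{..0::real} \<union> {0..} = UNIV" by auto
    thus ?thesis using continuous_on_closed_Un[OF closed_atMost closed_atLeast \<open>continuous_on {..0} x\<close> cont] by simp
  qed
  have x00: "x 0 = x0" using hist by simp
  have nonneg: "x s \<ge> 0" if "s \<ge> 0" for s
  proof (rule ccontr)
    assume neg: "\<not> 0 \<le> x s"
    hence s0: "s > 0" using that x00 hx0 by (cases "s = 0") auto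
    obtain t1 where t1: "0 \<le> t1" "t1 \<le> s" "x t1 = 0"
      using IVT2'[of x s 0 0, OF _ _ _ continuous_on_subset[OF cU]] neg x00 hx0 s0 by auto
    have "bounded (x ` {-\<tau>..s})"
      by (rule compact_imp_bounded[OF compact_continuous_image[OF continuous_on_subset[OF cU] compact_Icc]]) simp
    then obtain B where B0: "\<And>y. y \<in> x ` {-\<tau>..s} \<Longrightarrow> norm y \<le> B"
      unfolding bounded_iff by blast
    have B: "\<bar>x t\<bar> \<le> B" if "t \<in> {-\<tau>..s}" for t using B0[of "x t"] that by simp
    define M where "M = 1 + B * exp (\<bar>b\<bar> * B)"
    have "x s = 0"
    proof (rule zero_stays[OF t1(2) continuous_on_subset[OF cU] _ _ t1(3), of D M])
      fix t assume tt: "t1 < t" "t < s"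
      thus "(x has_real_derivative D t) (at t)" using der t1 by simp
      have b1: "\<bar>x t\<bar> \<le> B" using B tt t1 htau by auto
      have b2: "\<bar>x (t - \<tau>)\<bar> \<le> B" using B tt t1 htau by auto
      have "- b * x (t - \<tau>) \<le> \<bar>b\<bar> * B"
      proof -
        have "- b * x (t - \<tau>) \<le> \<bar>b\<bar> * \<bar>x (t - \<tau>)\<bar>" by (simp add: abs_mult[symmetric])
        also have "\<dots> \<le> \<bar>b\<bar> * B" using b2 by (simp add: mult_left_mono)
        finally show ?thesis .
      qed
      hence e: "exp (- b * x (t - \<tau>)) \<le> exp (\<bar>b\<bar> * B)" by simp
      have "\<bar>D t\<bar> = \<bar>x t\<bar> * \<bar>1 - x t * exp (- b * x (t - \<tau>))\<bar>"
        by (simp add: D_def abs_mult[symmetric] algebra_simps power2_eq_square)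
      also have "\<bar>1 - x t * exp (- b * x (t - \<tau>))\<bar> \<le> M"
      proof -
        have "\<bar>1 - x t * exp (- b * x (t - \<tau>))\<bar> \<le> \<bar>1\<bar> + \<bar>x t * exp (- b * x (t - \<tau>))\<bar>"
          by (rule abs_triangle_ineq4)
        also have "\<dots> = 1 + \<bar>x t\<bar> * exp (- b * x (t - \<tau>))" by (simp add: abs_mult)
        also have "\<dots> \<le> 1 + B * exp (\<bar>b\<bar> * B)"
          using b1 e by (simp add: mult_mono)
        finally show ?thesis by (simp add: M_def)
      qed
      hence "\<bar>x t\<bar> * \<bar>1 - x t * exp (- b * x (t - \<tau>))\<bar> \<le> \<bar>x t\<bar> * M" by (simp add: mult_left_mono)
      finally show "\<bar>D t\<bar> \<le> M * \<bar>x t\<bar>" by (simp add: mult.commute)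
    qed simp
    with neg show False by simp
  qed
  have nonnegU: "x t \<ge> 0" for t using nonneg[of t] hist[of t] hx0 by (cases "t \<ge> 0") auto
  have Dneg: "D t < 0" if "x t > 1" for t
  proof -
    have "exp (- b * x (t - \<tau>)) \<ge> 1" using hb nonnegU[of "t - \<tau>"] by (simp add: mult_nonpos_nonneg)
    hence "(x t)^2 * exp (- b * x (t - \<tau>)) \<ge> (x t)^2" using mult_left_mono[of 1 "exp (- b * x (t - \<tau>))" "(x t)^2"] by simp
    moreover have "(x t)^2 > x t" using that by (simp add: power2_eq_square)
    ultimately show ?thesis by (simp add: D_def)
  qed
  have below: "x t \<le> K" if "0 \<le> a" "a \<le> t" "x a \<le> K" "K \<ge> 1" for a t K
    by (rule stay_below[OF that(2) continuous_on_subset[OF cU] _ _ that(3), of D])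
       (use der that Dneg in \<open>auto intro: less_imp_le\<close>)
  have ub: "x t \<le> max x0 1" if "t \<ge> 0" for t
    using below[of 0 t "max x0 1"] that x00 by simp
  have bnd: "bounded (x ` {0..})"
    unfolding bounded_iff using ub nonneg
  proof (intro exI[of _ "max x0 1"] ballI)
    fix y assume "y \<in> x ` {0..}"
    then obtain t where "t \<ge> 0" "y = x t" by auto
    thus "norm y \<le> max x0 1" using ub[of t] nonneg[of t] by simp
  qed
  have ev: "\<exists>t0. \<forall>t\<ge>t0. 0 \<le> x t \<and> x t \<le> 1" if bn: "b < 0"
  proof -
    have "\<exists>t2\<ge>0. x t2 \<le> 1"
    proof (rule ccontr)
      assume "\<not> (\<exists>t2\<ge>0. x t2 \<le> 1)"
      hence big: "\<And>t. t \<ge> 0 \<Longrightarrow> x t > 1" by auto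
      have bigU: "x t > 1" for t using big[of t] big[of 0] hist[of t] x00 by (cases "t \<ge> 0") auto
      define \<delta> where "\<delta> = exp (- b) - 1"
      have dpos: "\<delta> > 0" using bn by (simp add: \<delta>_def)
      have Dle: "D t \<le> - \<delta>" for t
      proof -
        have "exp (- b * x (t - \<tau>)) \<ge> exp (- b)"
          using bn bigU[of "t - \<tau>"] by simp
        hence "(x t)^2 * exp (- b * x (t - \<tau>)) \<ge> (x t)^2 * exp (- b)" by (simp add: mult_left_mono)
        moreover have "(x t)^2 * exp (- b) - x t \<ge> exp (- b) - 1"
        proof -
          have "(x t)^2 * exp (- b) - x t = x t * (x t * exp (-b) - 1)" by (simp add: power2_eq_square algebra_simps)
          also have "\<dots> \<ge> 1 * (x t * exp (-b) - 1)"
          proof (rule mult_right_mono)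
            show "1 \<le> x t" using bigU[of t] by simp
            have "x t * exp (-b) \<ge> 1 * 1" using bigU[of t] bn by (intro mult_mono) auto
            thus "0 \<le> x t * exp (-b) - 1" by simp
          qed
          also have "1 * (x t * exp (-b) - 1) \<ge> exp (-b) - 1" using bigU[of t] by simp
          finally show ?thesis by simp
        qed
        ultimately show ?thesis by (simp add: D_def \<delta>_def)
      qed
      define T where "T = x0 / \<delta> + 1"
      have T: "T > 0" using hx0 dpos unfolding T_def
        by (simp add: add_nonneg_pos)
      obtain \<xi> where "0 < \<xi>" "\<xi> < T" "x T - x 0 = D \<xi> * (T - 0)"
        using mvt_real[OF T continuous_on_subset[OF cU], of D] der by auto
      moreover have "D \<xi> * T \<le> - \<delta> * T" using Dle[of \<xi>] T by (intro mult_right_mono) auto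
      ultimately have "x T \<le> x0 - \<delta> * T" using x00 by simp
      also have "\<dots> = - \<delta>" using dpos by (simp add: T_def field_simps)
      finally show False using bigU[of T] dpos by simp
    qed
    then obtain t2 where "t2 \<ge> 0" "x t2 \<le> 1" by blast
    thus ?thesis using below[of t2 _ 1] nonneg by (intro exI[of _ t2]) auto
  qed
  show ?thesis using bnd ev by blast
qed

end
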